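(* Let $\mathbb{R}^{\mathbb{N}}_B$ be the ring of bounded real sequences, let $o=\{f\in\mathbb{R}^{\mathbb{N}}: \lim_{n\to\infty} n f(n)=0\}$, and let $\mathbb{R}_{\mathcal F}^{\circ}=\mathbb{R}^{\mathbb{N}}_B/o$. Then: (1) $\mathbb{R}_{\mathcal F}^{\circ}$ is a partially ordered ring; (2) there are nonzero infinitesimals in $\mathbb{R}_{\mathcal F}^{\circ}$; (3) $\mathbb{R}_{\mathcal F}^{\circ}$ has nonzero nilpotent elements and, as a consequence, it has zero-divisors.
   Context: $o$ is an ideal of the ring $\mathbb{R}^{\mathbb{N}}_B$ (pointwise operations). Elements of the quotient are classes $[x]_o$ with operations $[x]_o+[y]_o=[x+y]_o$, $[x]_o[y]_o=[xy]_o$, and order $[x]_o\le_o[y]_o$ iff there exist $z\in o$ and $\bar n\in\mathbb{N}$ with $x_n\le y_n+z_n$ for all $n\ge\bar n$. The reals embed via constant sequences. For an ordered ring $R\supseteq\mathbb{R}$, an element $r\in R$ is infinitesimal iff $-1/n\le r\le 1/n$ for all $n\in\mathbb{N}$. *)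

theory Defs
  imports Complex_Main "HOL-Algebra.QuotRing"
begin

definition BR :: "(nat \<Rightarrow> real) ring" where
  "BR = \<lparr>carrier = {f. Bseq f},
         mult = (\<lambda>x y n. x n * y n),
         one = (\<lambda>n. 1),
         zero = (\<lambda>n. 0),
         add = (\<lambda>x y n. x n + y n)\<rparr>"

definition o_ideal :: "(nat \<Rightarrow> real) set" where
  "o_ideal = {f. (\<lambda>n. real n * f n) \<longlonglongrightarrow> 0}"

definition RFo :: "(nat \<Rightarrow> real) set ring" where
  "RFo = BR Quot o_ideal"

definition le_o :: "(nat \<Rightarrow> real) set \<Rightarrow> (nat \<Rightarrow> real) set \<Rightarrow> bool" where
  "le_o X Y \<longleftrightarrow> (\<exists>x\<in>X. \<exists>y\<in>Y. \<exists>z\<in>o_ideal. \<exists>nb::nat. \<forall>n\<ge>nb. x n \<le> y n + z n)"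

definition embed_o :: "real \<Rightarrow> (nat \<Rightarrow> real) set" where
  "embed_o c = o_ideal +>\<^bsub>BR\<^esub> (\<lambda>n. c)"

definition partially_ordered_ring :: "('a, 'm) ring_scheme \<Rightarrow> ('a \<Rightarrow> 'a \<Rightarrow> bool) \<Rightarrow> bool" where
  "partially_ordered_ring R leq \<longleftrightarrow>
     ring R \<and>
     (\<forall>x\<in>carrier R. leq x x) \<and>
     (\<forall>x\<in>carrier R. \<forall>y\<in>carrier R. leq x y \<and> leq y x \<longrightarrow> x = y) \<and>
     (\<forall>x\<in>carrier R. \<forall>y\<in>carrier R. \<forall>z\<in>carrier R. leq x y \<and> leq y z \<longrightarrow> leq x z) \<and>
     (\<forall>x\<in>carrier R. \<forall>y\<in>carrier R. \<forall>z\<in>carrier R. leq x y \<longrightarrow> leq (x \<oplus>\<^bsub>R\<^esub> z) (y \<oplus>\<^bsub>R\<^esub> z)) \<and>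
     (\<forall>x\<in>carrier R. \<forall>y\<in>carrier R. leq \<zero>\<^bsub>R\<^esub> x \<and> leq \<zero>\<^bsub>R\<^esub> y \<longrightarrow> leq \<zero>\<^bsub>R\<^esub> (x \<otimes>\<^bsub>R\<^esub> y))"

definition infinitesimal_o :: "(nat \<Rightarrow> real) set \<Rightarrow> bool" where
  "infinitesimal_o r \<longleftrightarrow>
     (\<forall>n::nat. n \<ge> 1 \<longrightarrow> le_o (embed_o (- 1 / real n)) r \<and> le_o r (embed_o (1 / real n)))"

end

theory Submission imports Defs begin

lemma Bseq_add2: "Bseq f \<Longrightarrow> Bseq g \<Longrightarrow> Bseq (\<lambda>n. f n + (g n::real))"
proof -
  assume "Bseq f" "Bseq g"
  then obtain K1 K2 where "\<And>n. norm (f n) \<le> K1" "\<And>n. norm (g n) \<le> K2" unfolding Bseq_def by blast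
  then have "norm (f n + g n) \<le> K1 + K2" for n
    by (smt (verit) norm_triangle_ineq)
  then show ?thesis by (rule BseqI')
qed

lemma carrier_BR[simp]: "carrier BR = {f. Bseq f}" and
  [simp]: "x \<oplus>\<^bsub>BR\<^esub> y = (\<lambda>n. x n + y n)" and
  [simp]: "x \<otimes>\<^bsub>BR\<^esub> y = (\<lambda>n. x n * y n)" and
  [simp]: "\<zero>\<^bsub>BR\<^esub> = (\<lambda>n. 0)" and
  [simp]: "\<one>\<^bsub>BR\<^esub> = (\<lambda>n. 1)"
  by (simp_all add: BR_def)

lemma ring_BR: "ring BR"
proof (rule ringI)
  show "abelian_group BR"
  proof (rule abelian_groupI)
    fix x assume "x \<in> carrier BR"
    then show "\<exists>y \<in> carrier BR. y \<oplus>\<^bsub>BR\<^esub> x = \<zero>\<^bsub>BR\<^esub>"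
      by (intro bexI[of _ "\<lambda>n. - x n"]) (simp_all add: Bseq_minus_iff)
  qed (simp_all add: Bseq_add2 add_ac)
  show "monoid BR"
    by (rule monoidI) (simp_all add: Bseq_mult mult.assoc)
qed (simp_all add: distrib_left distrib_right)

lemma inv_BR: "f \<in> carrier BR \<Longrightarrow> inv\<^bsub>add_monoid BR\<^esub> f = (\<lambda>n. - f n)"
proof -
  assume f: "f \<in> carrier BR"
  interpret ring BR by (rule ring_BR)
  show ?thesis
    by (rule group.inv_equality[OF a_group]) (use f in \<open>auto simp: Bseq_minus_iff\<close>)
qed

lemma o_Bseq: "f \<in> o_ideal \<Longrightarrow> Bseq f"
proof -
  assume "f \<in> o_ideal"
  then have "Bseq (\<lambda>n. real n * f n)" unfolding o_ideal_def
    using convergent_imp_Bseq convergentI by blast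
  then obtain K where K: "\<And>n. norm (real n * f n) \<le> K" unfolding Bseq_def by blast
  have "norm (f n) \<le> max (norm (f 0)) K" for n
  proof (cases n)
    case 0 then show ?thesis by simp
  next
    case (Suc m)
    have "norm (f n) \<le> norm (real n * f n)" using Suc by (simp add: abs_mult mult_le_cancel_right1)
    then show ?thesis using K[of n] by simp
  qed
  then show ?thesis by (rule BseqI')
qed

lemma o_add: "f \<in> o_ideal \<Longrightarrow> g \<in> o_ideal \<Longrightarrow> (\<lambda>n. f n + g n) \<in> o_ideal"
proof -
  assume "f \<in> o_ideal" "g \<in> o_ideal"
  then have "(\<lambda>n. real n * f n + real n * g n) \<longlonglongrightarrow> 0 + 0"
    unfolding o_ideal_def by (intro tendsto_add) auto
  then show ?thesis unfolding o_ideal_def by (simp add: distrib_left)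
qed

lemma o_minus: "f \<in> o_ideal \<Longrightarrow> (\<lambda>n. - f n) \<in> o_ideal"
proof -
  assume "f \<in> o_ideal"
  then have "(\<lambda>n. - (real n * f n)) \<longlonglongrightarrow> - 0"
    unfolding o_ideal_def by (intro tendsto_minus) auto
  then show ?thesis unfolding o_ideal_def by simp
qed

lemma o_zero: "(\<lambda>n. 0) \<in> o_ideal"
  unfolding o_ideal_def by simp

lemma o_mult: "f \<in> o_ideal \<Longrightarrow> Bseq g \<Longrightarrow> (\<lambda>n. f n * g n) \<in> o_ideal"
proof -
  assume f: "f \<in> o_ideal" and g: "Bseq g"
  have "Zfun (\<lambda>n. real n * f n) sequentially" using f unfolding o_ideal_def tendsto_Zfun_iff by simp
  moreover have "Bfun g sequentially" using g .
  ultimately have "Zfun (\<lambda>n. (real n * f n) * g n) sequentially"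
    by (rule bounded_bilinear.Zfun_prod_Bfun[OF bounded_bilinear_mult])
  then have "(\<lambda>n. (real n * f n) * g n) \<longlonglongrightarrow> 0" unfolding tendsto_Zfun_iff by simp
  moreover have "(\<lambda>n. (real n * f n) * g n) = (\<lambda>n. real n * (f n * g n))" by (simp add: mult.assoc)
  ultimately show ?thesis unfolding o_ideal_def by simp
qed


lemma ideal_o: "ideal o_ideal BR"
proof (rule idealI[OF ring_BR])
  interpret ring BR by (rule ring_BR)
  show "subgroup o_ideal (add_monoid BR)"
  proof (rule group.subgroupI[OF a_group])
    show "o_ideal \<subseteq> carrier (add_monoid BR)" using o_Bseq by auto
    show "o_ideal \<noteq> {}" using o_zero by auto
    fix a assume a: "a \<in> o_ideal"
    then show "inv\<^bsub>add_monoid BR\<^esub> a \<in> o_ideal" using inv_BR o_Bseq o_minus by auto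
    fix b assume "b \<in> o_ideal"
    then show "a \<otimes>\<^bsub>add_monoid BR\<^esub> b \<in> o_ideal" using a o_add by simp
  qed
next
  fix a x assume "a \<in> o_ideal" "x \<in> carrier BR"
  then show "x \<otimes>\<^bsub>BR\<^esub> a \<in> o_ideal" "a \<otimes>\<^bsub>BR\<^esub> x \<in> o_ideal"
    using o_mult[of a x] by (simp_all add: mult.commute)
qed

definition cls :: "(nat \<Rightarrow> real) \<Rightarrow> (nat \<Rightarrow> real) set" where
  "cls a = o_ideal +>\<^bsub>BR\<^esub> a"

lemma cls_eq: "cls a = {(\<lambda>n. h n + a n) | h. h \<in> o_ideal}"
  unfolding cls_def a_r_coset_def' by auto

lemma cls_mem: "a \<in> cls a"
  unfolding cls_eq using o_zero by force

lemma cls_eq_iff: "cls a = cls b \<longleftrightarrow> (\<lambda>n. a n - b n) \<in> o_ideal"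
proof
  assume "cls a = cls b"
  then have "a \<in> cls b" using cls_mem by metis
  then obtain h where "h \<in> o_ideal" "a = (\<lambda>n. h n + b n)" unfolding cls_eq by auto
  then show "(\<lambda>n. a n - b n) \<in> o_ideal" by simp
next
  assume d: "(\<lambda>n. a n - b n) \<in> o_ideal"
  have "(\<lambda>n. b n - a n) \<in> o_ideal" using o_minus[OF d] by simp
  show "cls a = cls b"
  proof
    show "cls a \<subseteq> cls b"
    proof
      fix x assume "x \<in> cls a"
      then obtain h where h: "h \<in> o_ideal" "x = (\<lambda>n. h n + a n)" unfolding cls_eq by auto
      have "(\<lambda>n. h n + (a n - b n)) \<in> o_ideal" using o_add[OF h(1) d] .
      moreover have "x = (\<lambda>n. (h n + (a n - b n)) + b n)" using h by auto
      ultimately show "x \<in> cls b" unfolding cls_eq by (intro CollectI exI[of _ "\<lambda>n. h n + (a n - b n)"]) simp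
    qed
    show "cls b \<subseteq> cls a"
    proof
      fix x assume "x \<in> cls b"
      then obtain h where h: "h \<in> o_ideal" "x = (\<lambda>n. h n + b n)" unfolding cls_eq by auto
      have "(\<lambda>n. h n + (b n - a n)) \<in> o_ideal" using o_add[OF h(1) \<open>(\<lambda>n. b n - a n) \<in> o_ideal\<close>] .
      moreover have "x = (\<lambda>n. (h n + (b n - a n)) + a n)" using h by auto
      ultimately show "x \<in> cls a" unfolding cls_eq by (intro CollectI exI[of _ "\<lambda>n. h n + (b n - a n)"]) simp
    qed
  qed
qed

lemma zero_RFo: "\<zero>\<^bsub>RFo\<^esub> = cls (\<lambda>n. 0)"
  unfolding RFo_def FactRing_def cls_eq by auto

lemma carrier_RFo: "carrier RFo = {cls a | a. Bseq a}"
  unfolding RFo_def FactRing_def A_RCOSETS_def' cls_def by auto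

lemma add_RFo: "Bseq a \<Longrightarrow> Bseq b \<Longrightarrow> cls a \<oplus>\<^bsub>RFo\<^esub> cls b = cls (\<lambda>n. a n + b n)"
  unfolding RFo_def cls_def using ideal.a_rcos_sum[OF ideal_o, of a b]
  by (simp add: FactRing_def)

lemma mult_RFo: "Bseq a \<Longrightarrow> Bseq b \<Longrightarrow> cls a \<otimes>\<^bsub>RFo\<^esub> cls b = cls (\<lambda>n. a n * b n)"
  unfolding RFo_def cls_def using ideal.rcoset_mult_add[OF ideal_o, of a b]
  by (simp add: FactRing_def)

lemma le_o_cls: "le_o (cls a) (cls b) \<longleftrightarrow> (\<exists>w\<in>o_ideal. \<exists>nb. \<forall>n\<ge>nb. a n \<le> b n + w n)"
proof
  assume "le_o (cls a) (cls b)"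
  then obtain x y z nb where x: "x \<in> cls a" and y: "y \<in> cls b" and z: "z \<in> o_ideal"
    and le: "\<forall>n\<ge>nb. x n \<le> y n + z n" unfolding le_o_def by blast
  obtain h1 where h1: "h1 \<in> o_ideal" "x = (\<lambda>n. h1 n + a n)" using x unfolding cls_eq by auto
  obtain h2 where h2: "h2 \<in> o_ideal" "y = (\<lambda>n. h2 n + b n)" using y unfolding cls_eq by auto
  have "(\<lambda>n. (h2 n + z n) + - h1 n) \<in> o_ideal" using o_add[OF o_add[OF h2(1) z] o_minus[OF h1(1)]] .
  moreover have "\<forall>n\<ge>nb. a n \<le> b n + ((h2 n + z n) + - h1 n)" using le h1 h2 by auto
  ultimately show "\<exists>w\<in>o_ideal. \<exists>nb. \<forall>n\<ge>nb. a n \<le> b n + w n"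
    by (intro bexI[of _ "\<lambda>n. (h2 n + z n) + - h1 n"]) auto
next
  assume "\<exists>w\<in>o_ideal. \<exists>nb. \<forall>n\<ge>nb. a n \<le> b n + w n"
  then show "le_o (cls a) (cls b)" unfolding le_o_def using cls_mem by blast
qed

lemma ring_RFo: "ring RFo"
  unfolding RFo_def by (rule ideal.quotient_is_ring[OF ideal_o])

lemma po: "partially_ordered_ring RFo le_o"
  unfolding partially_ordered_ring_def
proof (intro conjI ring_RFo ballI impI; (elim conjE)?)
  fix X assume "X \<in> carrier RFo"
  then obtain a where X: "X = cls a" using carrier_RFo by auto
  show "le_o X X" unfolding X le_o_cls using o_zero by force
next
  fix X Y assume "X \<in> carrier RFo" "Y \<in> carrier RFo" "le_o X Y" "le_o Y X"
  then obtain a b where X: "X = cls a" and Y: "Y = cls b" using carrier_RFo by auto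
  obtain w n1 where w: "w \<in> o_ideal" "\<forall>n\<ge>n1. a n \<le> b n + w n"
    using \<open>le_o X Y\<close> unfolding X Y le_o_cls by auto
  obtain w' n2 where w': "w' \<in> o_ideal" "\<forall>n\<ge>n2. b n \<le> a n + w' n"
    using \<open>le_o Y X\<close> unfolding X Y le_o_cls by auto
  have ev1: "eventually (\<lambda>n. - (real n * w' n) \<le> real n * (a n - b n)) sequentially"
    unfolding eventually_sequentially
  proof (intro exI[of _ n2] allI impI)
    fix n assume "n2 \<le> n"
    then have "- w' n \<le> a n - b n" using w'(2) by force
    then show "- (real n * w' n) \<le> real n * (a n - b n)"
      using mult_left_mono[of "- w' n" "a n - b n" "real n"] by simp
  qed
  have ev2: "eventually (\<lambda>n. real n * (a n - b n) \<le> real n * w n) sequentially"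
    unfolding eventually_sequentially
  proof (intro exI[of _ n1] allI impI)
    fix n assume "n1 \<le> n"
    then have "a n - b n \<le> w n" using w(2) by force
    then show "real n * (a n - b n) \<le> real n * w n"
      using mult_left_mono[of "a n - b n" "w n" "real n"] by simp
  qed
  have l1: "(\<lambda>n. - (real n * w' n)) \<longlonglongrightarrow> 0" using o_minus[OF w'(1)] unfolding o_ideal_def by simp
  have l2: "(\<lambda>n. real n * w n) \<longlonglongrightarrow> 0" using w(1) unfolding o_ideal_def by simp
  have "(\<lambda>n. real n * (a n - b n)) \<longlonglongrightarrow> 0"
    by (rule tendsto_sandwich[OF ev1 ev2 l1 l2])
  then show "X = Y" unfolding X Y cls_eq_iff o_ideal_def by simp
next
  fix X Y Z assume "X \<in> carrier RFo" "Y \<in> carrier RFo" "Z \<in> carrier RFo" "le_o X Y" "le_o Y Z"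
  then obtain a b c where X: "X = cls a" and Y: "Y = cls b" and Z: "Z = cls c" using carrier_RFo by auto
  obtain w n1 where w: "w \<in> o_ideal" "\<forall>n\<ge>n1. a n \<le> b n + w n"
    using \<open>le_o X Y\<close> unfolding X Y le_o_cls by auto
  obtain w' n2 where w': "w' \<in> o_ideal" "\<forall>n\<ge>n2. b n \<le> c n + w' n"
    using \<open>le_o Y Z\<close> unfolding Y Z le_o_cls by auto
  have "\<forall>n\<ge>max n1 n2. a n \<le> c n + (w n + w' n)"
  proof (intro allI impI)
    fix n assume "max n1 n2 \<le> n"
    then show "a n \<le> c n + (w n + w' n)" using w(2) w'(2) by force
  qed
  then show "le_o X Z" unfolding X Z le_o_cls using o_add[OF w(1) w'(1)]
    by (intro bexI[of _ "\<lambda>n. w n + w' n"] exI[of _ "max n1 n2"]) auto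
next
  fix X Y Z assume "X \<in> carrier RFo" "Y \<in> carrier RFo" "Z \<in> carrier RFo" "le_o X Y"
  then obtain a b c where X: "X = cls a" and Y: "Y = cls b" and Z: "Z = cls c"
    and ab: "Bseq a" "Bseq b" "Bseq c" using carrier_RFo by auto
  obtain w n1 where w: "w \<in> o_ideal" "\<forall>n\<ge>n1. a n \<le> b n + w n"
    using \<open>le_o X Y\<close> unfolding X Y le_o_cls by auto
  have "\<forall>n\<ge>n1. a n + c n \<le> (b n + c n) + w n" using w(2) by force
  then show "le_o (X \<oplus>\<^bsub>RFo\<^esub> Z) (Y \<oplus>\<^bsub>RFo\<^esub> Z)"
    unfolding X Y Z add_RFo[OF ab(1,3)] add_RFo[OF ab(2,3)] le_o_cls using w(1) by blast
next
  fix X Y assume "X \<in> carrier RFo" "Y \<in> carrier RFo" "le_o \<zero>\<^bsub>RFo\<^esub> X" "le_o \<zero>\<^bsub>RFo\<^esub> Y"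
  then obtain a b where X: "X = cls a" and Y: "Y = cls b"
    and ab: "Bseq a" "Bseq b" using carrier_RFo by auto
  obtain w n1 where w: "w \<in> o_ideal" "\<forall>n\<ge>n1. 0 \<le> a n + w n"
    using \<open>le_o \<zero>\<^bsub>RFo\<^esub> X\<close> unfolding X zero_RFo le_o_cls by auto
  obtain w' n2 where w': "w' \<in> o_ideal" "\<forall>n\<ge>n2. 0 \<le> b n + w' n"
    using \<open>le_o \<zero>\<^bsub>RFo\<^esub> Y\<close> unfolding Y zero_RFo le_o_cls by auto
  define W where "W = (\<lambda>n. (w' n * a n + w n * b n) + w n * w' n)"
  have WO: "W \<in> o_ideal" unfolding W_def
    by (intro o_add o_mult w w' ab o_Bseq)
  have "\<forall>n\<ge>max n1 n2. 0 \<le> a n * b n + W n"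
  proof (intro allI impI)
    fix n assume "max n1 n2 \<le> n"
    then have "0 \<le> (a n + w n) * (b n + w' n)" using w(2) w'(2) by simp
    then show "0 \<le> a n * b n + W n" unfolding W_def by (simp add: algebra_simps)
  qed
  then show "le_o \<zero>\<^bsub>RFo\<^esub> (X \<otimes>\<^bsub>RFo\<^esub> Y)"
    unfolding X Y zero_RFo mult_RFo[OF ab] le_o_cls using WO by blast
qed

definition e :: "nat \<Rightarrow> real" where "e n = inverse (real (Suc n))"

lemma e_Bseq: "Bseq e"
proof (rule BseqI')
  fix n show "norm (e n) \<le> 1" unfolding e_def by (simp add: inverse_le_1_iff)
qed

lemma e_not_o: "e \<notin> o_ideal"
proof
  assume "e \<in> o_ideal"
  then have "(\<lambda>n. real n / real (Suc n)) \<longlonglongrightarrow> 0" unfolding o_ideal_def e_def by (simp add: divide_inverse)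
  moreover have "(\<lambda>n. real n / real (Suc n)) \<longlonglongrightarrow> 1" by (rule LIMSEQ_n_over_Suc_n)
  ultimately show False using LIMSEQ_unique by fastforce
qed

lemma ee_o: "(\<lambda>n. e n * e n) \<in> o_ideal"
proof -
  have ev1: "eventually (\<lambda>n. 0 \<le> real n * (e n * e n)) sequentially" unfolding e_def by simp
  have ev2: "eventually (\<lambda>n. real n * (e n * e n) \<le> inverse (real (Suc n))) sequentially"
  proof (rule always_eventually, rule allI)
    fix n
    have "real n * inverse (real (Suc n)) \<le> 1" by (simp add: field_simps)
    then have "real n * inverse (real (Suc n)) * inverse (real (Suc n)) \<le> 1 * inverse (real (Suc n))"
      by (rule mult_right_mono) simp
    then show "real n * (e n * e n) \<le> inverse (real (Suc n))" unfolding e_def by (simp add: mult.assoc)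
  qed
  have "(\<lambda>n. real n * (e n * e n)) \<longlonglongrightarrow> 0"
    by (rule tendsto_sandwich[OF ev1 ev2 tendsto_const LIMSEQ_inverse_real_of_nat])
  then show ?thesis by (simp add: o_ideal_def)
qed

lemma ecls_carrier: "cls e \<in> carrier RFo" using carrier_RFo e_Bseq by auto

lemma ecls_nz: "cls e \<noteq> \<zero>\<^bsub>RFo\<^esub>"
  unfolding zero_RFo cls_eq_iff using e_not_o by simp

lemma ecls_sq: "cls e \<otimes>\<^bsub>RFo\<^esub> cls e = \<zero>\<^bsub>RFo\<^esub>"
  unfolding mult_RFo[OF e_Bseq e_Bseq] zero_RFo cls_eq_iff using ee_o by simp

lemma ecls_inf: "infinitesimal_o (cls e)"
  unfolding infinitesimal_o_def
proof (intro allI impI conjI)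
  fix m :: nat assume m: "1 \<le> m"
  have emb: "embed_o c = cls (\<lambda>n. c)" for c unfolding embed_o_def cls_def ..
  have "\<forall>n\<ge>0. - 1 / real m \<le> e n + 0"
  proof (intro allI impI)
    fix n :: nat
    have "0 \<le> e n" unfolding e_def by simp
    moreover have "- 1 / real m \<le> 0" by simp
    ultimately show "- 1 / real m \<le> e n + 0" by linarith
  qed
  then show "le_o (embed_o (- 1 / real m)) (cls e)" unfolding emb le_o_cls using o_zero by force
  have "\<forall>n\<ge>m. e n \<le> 1 / real m + 0"
  proof (intro allI impI)
    fix n assume "m \<le> n"
    then have "real m \<le> real (Suc n)" by simp
    then show "e n \<le> 1 / real m + 0" unfolding e_def using m
      by (simp add: inverse_eq_divide frac_le)
  qed
  then show "le_o (cls e) (embed_o (1 / real m))" unfolding emb le_o_cls using o_zero by force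
qed

theorem mainTheorem2:
  shows "partially_ordered_ring RFo le_o
    \<and> (\<exists>r\<in>carrier RFo. r \<noteq> \<zero>\<^bsub>RFo\<^esub> \<and> infinitesimal_o r)
    \<and> (\<exists>x\<in>carrier RFo. x \<noteq> \<zero>\<^bsub>RFo\<^esub> \<and> (\<exists>k::nat. x [^]\<^bsub>RFo\<^esub> k = \<zero>\<^bsub>RFo\<^esub>))
    \<and> (\<exists>x\<in>carrier RFo. \<exists>y\<in>carrier RFo. x \<noteq> \<zero>\<^bsub>RFo\<^esub> \<and> y \<noteq> \<zero>\<^bsub>RFo\<^esub>
         \<and> x \<otimes>\<^bsub>RFo\<^esub> y = \<zero>\<^bsub>RFo\<^esub>)"
proof (intro conjI po)
  show "\<exists>r\<in>carrier RFo. r \<noteq> \<zero>\<^bsub>RFo\<^esub> \<and> infinitesimal_o r"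
    using ecls_carrier ecls_nz ecls_inf by blast
  have "cls e [^]\<^bsub>RFo\<^esub> (2::nat) = cls e \<otimes>\<^bsub>RFo\<^esub> cls e"
    using monoid.l_one[OF ring.is_monoid[OF ring_RFo] ecls_carrier]
    by (simp add: numeral_2_eq_2)
  then show "\<exists>x\<in>carrier RFo. x \<noteq> \<zero>\<^bsub>RFo\<^esub> \<and> (\<exists>k::nat. x [^]\<^bsub>RFo\<^esub> k = \<zero>\<^bsub>RFo\<^esub>)"
    using ecls_carrier ecls_nz ecls_sq by metis
  show "\<exists>x\<in>carrier RFo. \<exists>y\<in>carrier RFo. x \<noteq> \<zero>\<^bsub>RFo\<^esub> \<and> y \<noteq> \<zero>\<^bsub>RFo\<^esub>
         \<and> x \<otimes>\<^bsub>RFo\<^esub> y = \<zero>\<^bsub>RFo\<^esub>"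
    using ecls_carrier ecls_nz ecls_sq by blast
qed

end
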